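(* Let $(Q,P)$ be a weakly quasi-lattice ordered group and let $\Lambda$ be a $P$-graph. Then: (1) $\mathrm{FA}(\Lambda)$ is a right ideal in $\Lambda$, i.e. if $\lambda\in\mathrm{FA}(\Lambda)$ and $s(\lambda)=r(\lambda')$ then $\lambda\lambda'\in\mathrm{FA}(\Lambda)$; (2) if $\mu\delta\in\mathrm{FA}(\Lambda)$ then $\delta\in\mathrm{FA}(\Lambda)$; (3) $\mathrm{FA}(\Lambda)$ is closed under the source map $s$; (4) $\mathrm{FA}(\Lambda)$ is not necessarily closed under the range map $r$, i.e. there exist such $(Q,P)$ and a $P$-graph $\Lambda$ with $\lambda\in\mathrm{FA}(\Lambda)$ but $r(\lambda)\notin\mathrm{FA}(\Lambda)$; (5) if $\mu\in\mathrm{FA}(\Lambda)$ then $s(\mu)\Lambda\subseteq\mathrm{FA}(\Lambda)$; (6) if $\mu,\nu\in\mathrm{FA}(\Lambda)$ then there is a finite $J\subseteq\mathrm{FA}(\Lambda)$ such that $\mu\Lambda\cap\nu\Lambda=\bigcup_{\lambda\in J}\lambda\Lambda$.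
   Context: $(Q,P)$ weakly quasi-lattice ordered: $Q$ a discrete group, $P\subseteq Q$ a subsemigroup containing the identity $e$ with $P\cap P^{-1}=\{e\}$, and, with $p\le r$ meaning $pq=r$ for some $q\in P$, any two elements of $P$ with a common upper bound have a least common upper bound. A $P$-graph is a countable small category $\Lambda$ (identities $\Lambda^{(0)}$, range/source $r,s$) with a functor $d:\Lambda\to P$ with unique factorisation (if $d(\lambda)=pq$ there are unique $\mu,\nu$ with $\lambda=\mu\nu$, $d(\mu)=p$, $d(\nu)=q$). For $\lambda\in\Lambda$, $\lambda\Lambda=\{\lambda\mu: \mu\in\Lambda, s(\lambda)=r(\mu)\}$. $\Lambda$ is finitely aligned at $(\mu,\nu)$ if there is a finite (possibly empty) $J\subseteq\Lambda$ with $\mu\Lambda\cap\nu\Lambda=\bigcup_{\lambda\in J}\lambda\Lambda$; $\Lambda$ is finitely aligned at $\lambda$ if it is finitely aligned at $(\mu,\nu)$ for every $\mu\in\lambda\Lambda$ and $\nu\in\Lambda$; $\mathrm{FA}(\Lambda)$ is the set of $\lambda\in\Lambda$ at which $\Lambda$ is finitely aligned. *)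

theory Defs
  imports "HOL-Algebra.Group" "HOL-Library.Countable_Set"
begin

definition qle :: "'q monoid \<Rightarrow> 'q set \<Rightarrow> 'q \<Rightarrow> 'q \<Rightarrow> bool" where
  "qle G P p r \<longleftrightarrow> (\<exists>q\<in>P. p \<otimes>\<^bsub>G\<^esub> q = r)"

definition wqlo :: "'q monoid \<Rightarrow> 'q set \<Rightarrow> bool" where
  "wqlo G P \<longleftrightarrow> group G \<and> P \<subseteq> carrier G \<and> \<one>\<^bsub>G\<^esub> \<in> P
     \<and> (\<forall>p\<in>P. \<forall>q\<in>P. p \<otimes>\<^bsub>G\<^esub> q \<in> P)
     \<and> (\<forall>p\<in>P. inv\<^bsub>G\<^esub> p \<in> P \<longrightarrow> p = \<one>\<^bsub>G\<^esub>)
     \<and> (\<forall>p\<in>P. \<forall>r\<in>P. (\<exists>c\<in>P. qle G P p c \<and> qle G P r c) \<longrightarrow>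
          (\<exists>l\<in>P. qle G P p l \<and> qle G P r l \<and>
             (\<forall>c\<in>P. qle G P p c \<and> qle G P r c \<longrightarrow> qle G P l c)))"

text \<open>A small category given by its set of morphisms (objects are identified with
  their identity morphisms), range, source, composition and degree functor.\<close>
record ('a, 'q) pgraph =
  pmor :: "'a set"
  prng :: "'a \<Rightarrow> 'a"
  psrc :: "'a \<Rightarrow> 'a"
  pcomp :: "'a \<Rightarrow> 'a \<Rightarrow> 'a"
  pdeg :: "'a \<Rightarrow> 'q"

definition pobj :: "('a, 'q) pgraph \<Rightarrow> 'a set" where
  "pobj L = {v \<in> pmor L. prng L v = v}"

definition small_cat :: "('a, 'q) pgraph \<Rightarrow> bool" where
  "small_cat L \<longleftrightarrow>
     (\<forall>x\<in>pmor L. prng L x \<in> pmor L \<and> psrc L x \<in> pmor L)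
   \<and> (\<forall>x\<in>pmor L. prng L (prng L x) = prng L x \<and> psrc L (prng L x) = prng L x
                 \<and> prng L (psrc L x) = psrc L x \<and> psrc L (psrc L x) = psrc L x)
   \<and> (\<forall>x\<in>pmor L. \<forall>y\<in>pmor L. psrc L x = prng L y \<longrightarrow>
         pcomp L x y \<in> pmor L \<and> prng L (pcomp L x y) = prng L x
         \<and> psrc L (pcomp L x y) = psrc L y)
   \<and> (\<forall>x\<in>pmor L. \<forall>y\<in>pmor L. \<forall>z\<in>pmor L. psrc L x = prng L y \<longrightarrow> psrc L y = prng L z \<longrightarrow>
         pcomp L (pcomp L x y) z = pcomp L x (pcomp L y z))
   \<and> (\<forall>x\<in>pmor L. pcomp L (prng L x) x = x \<and> pcomp L x (psrc L x) = x)"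

definition pgraph :: "'q monoid \<Rightarrow> 'q set \<Rightarrow> ('a, 'q) pgraph \<Rightarrow> bool" where
  "pgraph G P L \<longleftrightarrow> small_cat L \<and> countable (pmor L)
   \<and> (\<forall>x\<in>pmor L. pdeg L x \<in> P)
   \<and> (\<forall>v\<in>pobj L. pdeg L v = \<one>\<^bsub>G\<^esub>)
   \<and> (\<forall>x\<in>pmor L. \<forall>y\<in>pmor L. psrc L x = prng L y \<longrightarrow>
         pdeg L (pcomp L x y) = pdeg L x \<otimes>\<^bsub>G\<^esub> pdeg L y)
   \<and> (\<forall>l\<in>pmor L. \<forall>p\<in>P. \<forall>q\<in>P. pdeg L l = p \<otimes>\<^bsub>G\<^esub> q \<longrightarrow>
         (\<exists>!(m, n). m \<in> pmor L \<and> n \<in> pmor L \<and> psrc L m = prng L n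
             \<and> pcomp L m n = l \<and> pdeg L m = p \<and> pdeg L n = q))"

text \<open>\<lambda>\<Lambda> = {\<lambda>\<mu> : s(\<lambda>) = r(\<mu>)}\<close>
definition rset :: "('a, 'q) pgraph \<Rightarrow> 'a \<Rightarrow> 'a set" where
  "rset L l = {pcomp L l m | m. m \<in> pmor L \<and> psrc L l = prng L m}"

definition fa_pair :: "('a, 'q) pgraph \<Rightarrow> 'a \<Rightarrow> 'a \<Rightarrow> bool" where
  "fa_pair L m n \<longleftrightarrow> (\<exists>J. finite J \<and> J \<subseteq> pmor L \<and>
      rset L m \<inter> rset L n = (\<Union>l\<in>J. rset L l))"

definition fa_at :: "('a, 'q) pgraph \<Rightarrow> 'a \<Rightarrow> bool" where
  "fa_at L l \<longleftrightarrow> (\<forall>m\<in>rset L l. \<forall>n\<in>pmor L. fa_pair L m n)"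

definition FA :: "('a, 'q) pgraph \<Rightarrow> 'a set" where
  "FA L = {l \<in> pmor L. fa_at L l}"

end

theory Submission
  imports Defs
begin


locale pg =
  fixes G :: "'q monoid" and P :: "'q set" and L :: "('a, 'q) pgraph"
  assumes wq: "wqlo G P" and pgr: "pgraph G P L"
begin

lemma grp: "group G" using wq unfolding wqlo_def by blast
lemma Pc: "P \<subseteq> carrier G" using wq unfolding wqlo_def by blast
lemma sc: "small_cat L" using pgr unfolding pgraph_def by blast

lemma rng_in: "x \<in> pmor L \<Longrightarrow> prng L x \<in> pmor L" using sc unfolding small_cat_def by blast
lemma src_in: "x \<in> pmor L \<Longrightarrow> psrc L x \<in> pmor L" using sc unfolding small_cat_def by blast
lemma rr: "x \<in> pmor L \<Longrightarrow> prng L (prng L x) = prng L x \<and> psrc L (prng L x) = prng L x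
                 \<and> prng L (psrc L x) = psrc L x \<and> psrc L (psrc L x) = psrc L x"
  using sc unfolding small_cat_def by blast
lemma comp: "x \<in> pmor L \<Longrightarrow> y \<in> pmor L \<Longrightarrow> psrc L x = prng L y \<Longrightarrow>
         pcomp L x y \<in> pmor L \<and> prng L (pcomp L x y) = prng L x
         \<and> psrc L (pcomp L x y) = psrc L y"
  using sc unfolding small_cat_def by blast
lemma assoc: "x \<in> pmor L \<Longrightarrow> y\<in>pmor L \<Longrightarrow> z\<in>pmor L \<Longrightarrow> psrc L x = prng L y \<Longrightarrow> psrc L y = prng L z \<Longrightarrow>
         pcomp L (pcomp L x y) z = pcomp L x (pcomp L y z)"
  using sc unfolding small_cat_def by blast
lemma idl: "x \<in> pmor L \<Longrightarrow> pcomp L (prng L x) x = x" using sc unfolding small_cat_def by blast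
lemma idr: "x \<in> pmor L \<Longrightarrow> pcomp L x (psrc L x) = x" using sc unfolding small_cat_def by blast

lemma degP: "x \<in> pmor L \<Longrightarrow> pdeg L x \<in> P" using pgr unfolding pgraph_def by blast
lemma degm: "x \<in> pmor L \<Longrightarrow> y \<in> pmor L \<Longrightarrow> psrc L x = prng L y \<Longrightarrow>
         pdeg L (pcomp L x y) = pdeg L x \<otimes>\<^bsub>G\<^esub> pdeg L y" using pgr unfolding pgraph_def by blast
lemma uf: "l \<in> pmor L \<Longrightarrow> p \<in> P \<Longrightarrow> q \<in> P \<Longrightarrow> pdeg L l = p \<otimes>\<^bsub>G\<^esub> q \<Longrightarrow>
         (\<exists>!(m, n). m \<in> pmor L \<and> n \<in> pmor L \<and> psrc L m = prng L n
             \<and> pcomp L m n = l \<and> pdeg L m = p \<and> pdeg L n = q)"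
  using pgr unfolding pgraph_def by blast

lemma cancel:
  assumes m: "m \<in> pmor L" and a: "a \<in> pmor L" and b: "b \<in> pmor L"
    and ma: "psrc L m = prng L a" and mb: "psrc L m = prng L b"
    and eq: "pcomp L m a = pcomp L m b"
  shows "a = b"
proof -
  have "pdeg L m \<otimes>\<^bsub>G\<^esub> pdeg L a = pdeg L m \<otimes>\<^bsub>G\<^esub> pdeg L b"
    using degm[OF m a ma] degm[OF m b mb] eq by simp
  moreover have "pdeg L m \<in> carrier G" "pdeg L a \<in> carrier G" "pdeg L b \<in> carrier G"
    using Pc degP[OF m] degP[OF a] degP[OF b] by auto
  ultimately have d: "pdeg L a = pdeg L b"
    using group.Units_eq[OF grp] monoid.Units_l_cancel[OF group.is_monoid[OF grp]] by auto
  define Q where "Q = (\<lambda>(x, y). x \<in> pmor L \<and> y \<in> pmor L \<and> psrc L x = prng L y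
             \<and> pcomp L x y = pcomp L m a \<and> pdeg L x = pdeg L m \<and> pdeg L y = pdeg L a)"
  have "\<exists>!z. Q z"
    unfolding Q_def using uf[OF conjunct1[OF comp[OF m a ma]] degP[OF m] degP[OF a] degm[OF m a ma]] .
  then obtain z where z: "\<And>y. Q y \<Longrightarrow> y = z" by blast
  have "Q (m, a)" "Q (m, b)" unfolding Q_def using m a b ma mb eq d by auto
  then have "(m, a) = (m, b)" using z by metis
  then show ?thesis by simp
qed

lemma rset_mem: "a \<in> rset L b \<longleftrightarrow> (\<exists>w. w \<in> pmor L \<and> psrc L b = prng L w \<and> a = pcomp L b w)"
  unfolding rset_def by blast

lemma rset_sub: "b \<in> pmor L \<Longrightarrow> a \<in> rset L b \<Longrightarrow> a \<in> pmor L \<and> prng L a = prng L b"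
  unfolding rset_def using comp by blast

lemma rset_self: "b \<in> pmor L \<Longrightarrow> b \<in> rset L b"
  unfolding rset_mem using idr src_in rr by metis

lemma rset_trans: assumes b: "b \<in> pmor L" and ab: "a \<in> rset L b" shows "rset L a \<subseteq> rset L b"
proof
  fix x assume "x \<in> rset L a"
  then obtain u where u: "u \<in> pmor L" "psrc L a = prng L u" "x = pcomp L a u" unfolding rset_mem by blast
  obtain w where w: "w \<in> pmor L" "psrc L b = prng L w" "a = pcomp L b w" using ab unfolding rset_mem by blast
  have "psrc L w = prng L u" using u w comp b by metis
  then have "x = pcomp L b (pcomp L w u)" using assoc[OF b w(1) u(1)] w u by simp
  moreover have "pcomp L w u \<in> pmor L \<and> prng L (pcomp L w u) = prng L w" using comp w u \<open>psrc L w = prng L u\<close> by blast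
  ultimately show "x \<in> rset L b" unfolding rset_mem using w by metis
qed

lemma rset_left: assumes m: "m \<in> pmor L" and a: "a \<in> pmor L" and b: "b \<in> pmor L"
  and ma: "psrc L m = prng L a" and mb: "psrc L m = prng L b"
  shows "pcomp L m a \<in> rset L (pcomp L m b) \<longleftrightarrow> a \<in> rset L b"
proof
  assume "a \<in> rset L b"
  then obtain w where w: "w \<in> pmor L" "psrc L b = prng L w" "a = pcomp L b w" unfolding rset_mem by blast
  have "pcomp L m a = pcomp L (pcomp L m b) w" using assoc[OF m b w(1) mb w(2)] w by simp
  then show "pcomp L m a \<in> rset L (pcomp L m b)" unfolding rset_mem using w comp[OF m b mb] by metis
next
  assume "pcomp L m a \<in> rset L (pcomp L m b)"
  then obtain w where w: "w \<in> pmor L" "psrc L (pcomp L m b) = prng L w" "pcomp L m a = pcomp L (pcomp L m b) w" unfolding rset_mem by blast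
  have bw: "psrc L b = prng L w" using w comp[OF m b mb] by simp
  have "pcomp L m a = pcomp L m (pcomp L b w)" using assoc[OF m b w(1) mb bw] w by simp
  moreover have "pcomp L b w \<in> pmor L \<and> prng L (pcomp L b w) = prng L b" using comp[OF b w(1) bw] by blast
  ultimately have "a = pcomp L b w" using cancel[OF m a] ma mb by metis
  then show "a \<in> rset L b" unfolding rset_mem using w bw by blast
qed

lemma part1: assumes l: "l \<in> FA L" and l': "l' \<in> pmor L" and c: "psrc L l = prng L l'"
  shows "pcomp L l l' \<in> FA L"
proof -
  have lm: "l \<in> pmor L" using l unfolding FA_def by blast
  have "pcomp L l l' \<in> rset L l" unfolding rset_mem using l' c by blast
  then have "rset L (pcomp L l l') \<subseteq> rset L l" using rset_trans lm by blast
  then show ?thesis using l comp[OF lm l' c] unfolding FA_def fa_at_def by blast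
qed

lemma part2: assumes m: "m \<in> pmor L" and d: "d \<in> pmor L" and md: "psrc L m = prng L d"
  and F: "pcomp L m d \<in> FA L"
  shows "d \<in> FA L"
  unfolding FA_def fa_at_def
proof (intro CollectI conjI d ballI)
  fix x n assume x: "x \<in> rset L d" and n: "n \<in> pmor L"
  obtain y where y: "y \<in> pmor L" "psrc L d = prng L y" "x = pcomp L d y" using x unfolding rset_mem by blast
  have xm: "x \<in> pmor L" and xr: "prng L x = prng L d" using rset_sub[OF d x] by auto
  show "fa_pair L x n"
  proof (cases "prng L n = prng L x")
    case False
    have "rset L x \<inter> rset L n = {}"
    proof (rule equals0I)
      fix a assume "a \<in> rset L x \<inter> rset L n"
      then show False using rset_sub[OF xm, of a] rset_sub[OF n, of a] False by auto
    qed
    then show ?thesis unfolding fa_pair_def by (intro exI[of _ "{}"]) simp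
  next
    case True
    have mx: "psrc L m = prng L x" using xr md by simp
    have mn: "psrc L m = prng L n" using True mx by simp
    have "pcomp L m x \<in> rset L (pcomp L m d)" using rset_left[OF m xm d mx md] x by blast
    then have "fa_pair L (pcomp L m x) (pcomp L m n)"
      using F n comp[OF m n mn] unfolding FA_def fa_at_def by blast
    then obtain J where J: "finite J" "J \<subseteq> pmor L"
      "rset L (pcomp L m x) \<inter> rset L (pcomp L m n) = (\<Union>l\<in>J. rset L l)"
      unfolding fa_pair_def by blast
    have ex: "\<exists>j'. j' \<in> pmor L \<and> psrc L m = prng L j' \<and> j = pcomp L m j'" if j: "j \<in> J" for j
    proof -
      have "j \<in> rset L (pcomp L m x)" using J j rset_self by blast
      then obtain w where w: "w \<in> pmor L" "psrc L (pcomp L m x) = prng L w" "j = pcomp L (pcomp L m x) w"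
        unfolding rset_mem by blast
      have xw: "psrc L x = prng L w" using w comp[OF m xm mx] by simp
      show ?thesis using assoc[OF m xm w(1) mx xw] w comp[OF xm w(1) xw] mx by (intro exI[of _ "pcomp L x w"]) simp
    qed
    define f where "f j = (SOME j'. j' \<in> pmor L \<and> psrc L m = prng L j' \<and> j = pcomp L m j')" for j
    have f: "f j \<in> pmor L \<and> psrc L m = prng L (f j) \<and> j = pcomp L m (f j)" if "j \<in> J" for j
      unfolding f_def using someI_ex[OF ex[OF that]] .
    have f1: "f j \<in> pmor L" "psrc L m = prng L (f j)" "pcomp L m (f j) = j" if "j \<in> J" for j
      using f[OF that] by auto
    have eq: "rset L x \<inter> rset L n = (\<Union>j\<in>J. rset L (f j))"
    proof (intro equalityI subsetI)
      fix z assume z: "z \<in> rset L x \<inter> rset L n"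
      have zm: "z \<in> pmor L" and zr: "prng L z = prng L x" using rset_sub xm z by auto
      have mz: "psrc L m = prng L z" using zr mx by simp
      have "pcomp L m z \<in> rset L (pcomp L m x) \<inter> rset L (pcomp L m n)"
        using rset_left[OF m zm xm mz mx] rset_left[OF m zm n mz mn] z by blast
      then obtain j where j: "j \<in> J" "pcomp L m z \<in> rset L j" using J by blast
      then have "pcomp L m z \<in> rset L (pcomp L m (f j))" using f1(3)[OF j(1)] by simp
      then have "z \<in> rset L (f j)" using rset_left[OF m zm f1(1)[OF j(1)] mz f1(2)[OF j(1)]] by blast
      then show "z \<in> (\<Union>j\<in>J. rset L (f j))" using j by blast
    next
      fix z assume "z \<in> (\<Union>j\<in>J. rset L (f j))"
      then obtain j where j: "j \<in> J" "z \<in> rset L (f j)" by blast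
      have zm: "z \<in> pmor L" and zr: "prng L z = prng L (f j)" using rset_sub[OF f1(1)[OF j(1)] j(2)] by auto
      have mz: "psrc L m = prng L z" using zr f1(2)[OF j(1)] by simp
      have "pcomp L m z \<in> rset L (pcomp L m (f j))" using rset_left[OF m zm f1(1)[OF j(1)] mz f1(2)[OF j(1)]] j(2) by blast
      then have "pcomp L m z \<in> rset L j" using f1(3)[OF j(1)] by simp
      then have "pcomp L m z \<in> rset L (pcomp L m x) \<inter> rset L (pcomp L m n)" using J j by blast
      then show "z \<in> rset L x \<inter> rset L n"
        using rset_left[OF m zm xm mz mx] rset_left[OF m zm n mz mn] by blast
    qed
    show ?thesis unfolding fa_pair_def
      using eq J f1(1) by (intro exI[of _ "f ` J"]) auto
  qed
qed

lemma part3: "l \<in> FA L \<Longrightarrow> psrc L l \<in> FA L"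
  using part2[of l "psrc L l"] idr src_in rr unfolding FA_def by auto

lemma part5: assumes m: "m \<in> FA L" shows "rset L (psrc L m) \<subseteq> FA L"
proof
  fix x assume x: "x \<in> rset L (psrc L m)"
  have mm: "m \<in> pmor L" using m unfolding FA_def by blast
  obtain y where y: "y \<in> pmor L" "psrc L (psrc L m) = prng L y" "x = pcomp L (psrc L m) y"
    using x unfolding rset_mem by blast
  have xy: "x = y" using y rr[OF mm] idl by metis
  have c: "psrc L m = prng L y" using y rr[OF mm] by simp
  show "x \<in> FA L" using part2[OF mm y(1) c part1[OF m y(1) c]] xy by simp
qed

lemma part6: assumes m: "m \<in> FA L" and n: "n \<in> FA L"
  shows "\<exists>J. finite J \<and> J \<subseteq> FA L \<and> rset L m \<inter> rset L n = (\<Union>l\<in>J. rset L l)"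
proof -
  have mm: "m \<in> pmor L" and nm: "n \<in> pmor L" using m n unfolding FA_def by auto
  have "fa_pair L m n" using m nm rset_self[OF mm] unfolding FA_def fa_at_def by blast
  then obtain J where J: "finite J" "J \<subseteq> pmor L" "rset L m \<inter> rset L n = (\<Union>l\<in>J. rset L l)"
    unfolding fa_pair_def by blast
  have "J \<subseteq> FA L"
  proof
    fix j assume j: "j \<in> J"
    then have "j \<in> rset L m" using J rset_self by blast
    then obtain w where "w \<in> pmor L" "psrc L m = prng L w" "j = pcomp L m w" unfolding rset_mem by blast
    then show "j \<in> FA L" using part1[OF m] by simp
  qed
  then show ?thesis using J by blast
qed

end


definition padd :: "int \<times> int \<Rightarrow> int \<times> int \<Rightarrow> int \<times> int" where
  "padd u v = (fst u + fst v, snd u + snd v)"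

definition Gx :: "nat monoid" where
  "Gx = \<lparr>carrier = range (to_nat :: int \<times> int \<Rightarrow> nat),
        mult = (\<lambda>x y. to_nat (padd (from_nat x :: int \<times> int) (from_nat y))),
        one = to_nat (0::int, 0::int)\<rparr>"

definition Px :: "nat set" where
  "Px = (to_nat :: int \<times> int \<Rightarrow> nat) ` {u. 0 \<le> fst u \<and> 0 \<le> snd u}"

lemma tn_eq [simp]: "(to_nat (a::'c::countable) = to_nat b) = (a = b)"
  using inj_to_nat by (metis injD)

lemma Gx_simps [simp]: "carrier Gx = range (to_nat :: int \<times> int \<Rightarrow> nat)"
  "to_nat u \<otimes>\<^bsub>Gx\<^esub> to_nat v = to_nat (padd u v)"
  "\<one>\<^bsub>Gx\<^esub> = to_nat (0::int, 0::int)"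
  by (auto simp: Gx_def)

lemma grpx: "group Gx"
proof (rule groupI)
  show "\<exists>y\<in>carrier Gx. y \<otimes>\<^bsub>Gx\<^esub> x = \<one>\<^bsub>Gx\<^esub>" if xc: "x \<in> carrier Gx" for x
  proof -
    obtain u :: "int \<times> int" where u: "x = to_nat u" using xc unfolding Gx_simps by blast
    show ?thesis using u by (intro bexI[of _ "to_nat (- fst u, - snd u)"]) (auto simp: padd_def)
  qed
qed (auto simp: padd_def)

lemma inv_x: "inv\<^bsub>Gx\<^esub> (to_nat (u::int \<times> int)) = to_nat (- fst u, - snd u)"
  by (rule group.inv_equality[OF grpx]) (auto simp: padd_def)

lemma qle_x: "qle Gx Px (to_nat (u::int\<times>int)) (to_nat v) \<longleftrightarrow> fst u \<le> fst v \<and> snd u \<le> snd v"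
proof
  assume "qle Gx Px (to_nat u) (to_nat v)"
  then obtain q where "0 \<le> fst q" "0 \<le> snd q" "padd u q = v" unfolding qle_def Px_def by auto
  then show "fst u \<le> fst v \<and> snd u \<le> snd v" unfolding padd_def by auto
next
  assume a: "fst u \<le> fst v \<and> snd u \<le> snd v"
  have "padd u (fst v - fst u, snd v - snd u) = v" unfolding padd_def by simp
  then show "qle Gx Px (to_nat u) (to_nat v)" unfolding qle_def Px_def using a
    by (intro bexI[of _ "to_nat (fst v - fst u, snd v - snd u)"]) auto
qed

lemma wqlo_x: "wqlo Gx Px"
  unfolding wqlo_def
proof (intro conjI grpx ballI impI)
  show "Px \<subseteq> carrier Gx" unfolding Px_def by auto
  show "\<one>\<^bsub>Gx\<^esub> \<in> Px" unfolding Px_def by auto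
  show "p \<otimes>\<^bsub>Gx\<^esub> q \<in> Px" if "p \<in> Px" "q \<in> Px" for p q
    using that unfolding Px_def by (auto simp: padd_def)
  show "p = \<one>\<^bsub>Gx\<^esub>" if pp: "p \<in> Px" "inv\<^bsub>Gx\<^esub> p \<in> Px" for p
  proof -
    obtain u :: "int\<times>int" where u: "p = to_nat u" "0 \<le> fst u" "0 \<le> snd u" using pp(1) unfolding Px_def by blast
    have "to_nat (- fst u, - snd u) \<in> Px" using pp(2) u(1) inv_x by simp
    then have "0 \<le> - fst u" "0 \<le> - snd u" unfolding Px_def by auto
    then show ?thesis using u by (cases u) auto
  qed
  show "\<exists>l\<in>Px. qle Gx Px p l \<and> qle Gx Px r l \<and> (\<forall>c\<in>Px. qle Gx Px p c \<and> qle Gx Px r c \<longrightarrow> qle Gx Px l c)"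
    if pp: "p \<in> Px" "r \<in> Px" for p r
  proof -
    obtain u :: "int\<times>int" where u: "p = to_nat u" "0 \<le> fst u" "0 \<le> snd u" using pp(1) unfolding Px_def by blast
    obtain w :: "int\<times>int" where w: "r = to_nat w" "0 \<le> fst w" "0 \<le> snd w" using pp(2) unfolding Px_def by blast
    let ?l = "to_nat (max (fst u) (fst w), max (snd u) (snd w))"
    have "\<forall>c\<in>Px. qle Gx Px p c \<and> qle Gx Px r c \<longrightarrow> qle Gx Px ?l c"
    proof (intro ballI impI)
      fix c assume c: "c \<in> Px" "qle Gx Px p c \<and> qle Gx Px r c"
      obtain v :: "int\<times>int" where v: "c = to_nat v" using c(1) unfolding Px_def by blast
      show "qle Gx Px ?l c" using c(2) unfolding v u w qle_x by simp
    qed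
    moreover have "?l \<in> Px" unfolding Px_def using u w by auto
    moreover have "qle Gx Px p ?l \<and> qle Gx Px r ?l" unfolding u w qle_x by simp
    ultimately show ?thesis by blast
  qed
qed

datatype M = V | X | Y | Z | Mu | Nu | Ll | A nat | B nat | Lam nat

instance M :: countable by countable_datatype

fun isobj :: "M \<Rightarrow> bool" where
  "isobj V = True" | "isobj X = True" | "isobj Y = True" | "isobj Z = True" | "isobj _ = False"

fun rngM :: "M \<Rightarrow> M" where
  "rngM V = V" | "rngM X = X" | "rngM Y = Y" | "rngM Z = Z"
| "rngM Mu = V" | "rngM Nu = V" | "rngM Ll = V" | "rngM (Lam i) = V"
| "rngM (A i) = X" | "rngM (B i) = Y"

fun srcM :: "M \<Rightarrow> M" where
  "srcM V = V" | "srcM X = X" | "srcM Y = Y" | "srcM Z = Z"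
| "srcM Mu = X" | "srcM Nu = Y" | "srcM Ll = Z" | "srcM (Lam i) = Z"
| "srcM (A i) = Z" | "srcM (B i) = Z"

fun degM :: "M \<Rightarrow> int \<times> int" where
  "degM V = (0,0)" | "degM X = (0,0)" | "degM Y = (0,0)" | "degM Z = (0,0)"
| "degM Mu = (1,0)" | "degM Nu = (0,1)" | "degM Ll = (1,0)" | "degM (Lam i) = (1,1)"
| "degM (A i) = (0,1)" | "degM (B i) = (1,0)"

fun compM :: "M \<Rightarrow> M \<Rightarrow> M" where
  "compM Mu (A i) = Lam i" | "compM Nu (B i) = Lam i" | "compM m n = (if isobj m then n else m)"

lemma rr_M: "rngM (rngM x) = rngM x" "srcM (rngM x) = rngM x" "rngM (srcM x) = srcM x" "srcM (srcM x) = srcM x"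
  by (cases x; simp)+

lemma comp_M: "srcM x = rngM y \<Longrightarrow> rngM (compM x y) = rngM x \<and> srcM (compM x y) = srcM y
   \<and> degM (compM x y) = padd (degM x) (degM y)"
  by (cases x; cases y; simp add: padd_def)

lemma assoc_M: "srcM x = rngM y \<Longrightarrow> srcM y = rngM z \<Longrightarrow> compM (compM x y) z = compM x (compM y z)"
  by (cases x; cases y; cases z; simp)

lemma id_M: "compM (rngM x) x = x" "compM x (srcM x) = x"
  by (cases x; simp)+

lemma obj_M: "rngM v = v \<longleftrightarrow> isobj v" "degM v = (0,0) \<longleftrightarrow> isobj v"
  by (cases v; simp)+

lemma deg_nonneg: "0 \<le> fst (degM x) \<and> 0 \<le> snd (degM x)"
  by (cases x; simp)

lemma char_M: "srcM m = rngM n \<Longrightarrow> compM m n = l \<Longrightarrow>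
   (isobj m \<and> n = l \<and> m = rngM l) \<or> (isobj n \<and> \<not> isobj m \<and> m = l \<and> n = srcM l)
   \<or> (\<exists>i. m = Mu \<and> n = A i \<and> l = Lam i) \<or> (\<exists>i. m = Nu \<and> n = B i \<and> l = Lam i)"
  by (cases m; cases n; auto)


lemma uniq_M:
  assumes "srcM m = rngM n" "compM m n = l" "degM m = p" "degM n = q"
    "srcM m' = rngM n'" "compM m' n' = l" "degM m' = p" "degM n' = q"
  shows "m = m' \<and> n = n'"
proof -
  note c1 = char_M[OF assms(1,2)] and c2 = char_M[OF assms(5,6)]
  have o: "isobj m = isobj m'" "isobj n = isobj n'"
    using assms(3,4,7,8) obj_M(2)[of m] obj_M(2)[of m'] obj_M(2)[of n] obj_M(2)[of n'] by auto
  show ?thesis using c1 c2 o assms(3,7) by auto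
qed

lemma exist_M:
  assumes p: "0 \<le> fst p" "0 \<le> snd p" and q: "0 \<le> fst q" "0 \<le> snd q" and d: "degM l = padd p q"
  shows "\<exists>m n. srcM m = rngM n \<and> compM m n = l \<and> degM m = p \<and> degM n = q"
proof -
  obtain a b c e where pq: "p = (a, b)" "q = (c, e)" by (cases p, cases q) auto
  show ?thesis
  proof (cases "p = (0,0)")
    case True
    have "isobj (rngM l)" using obj_M(1)[of "rngM l"] rr_M by simp
    then have "degM (rngM l) = (0,0)" using obj_M(2) by blast
    then show ?thesis using True d rr_M id_M by (intro exI[of _ "rngM l"] exI[of _ l]) (auto simp: padd_def)
  next
    case F1: False
    show ?thesis
    proof (cases "q = (0,0)")
      case True
      have "isobj (srcM l)" using obj_M(1)[of "srcM l"] rr_M by simp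
      then have "degM (srcM l) = (0,0)" using obj_M(2) by blast
      then show ?thesis using True d rr_M id_M by (intro exI[of _ l] exI[of _ "srcM l"]) (auto simp: padd_def)
    next
      case F2: False
      show ?thesis
      proof (cases l)
        case (Lam i)
        then have s: "a + c = 1" "b + e = 1" using d pq by (auto simp: padd_def)
        then have "(a = 1 \<and> b = 0 \<and> c = 0 \<and> e = 1) \<or> (a = 0 \<and> b = 1 \<and> c = 1 \<and> e = 0)"
          using F1 F2 pq p q by auto
        then show ?thesis
        proof
          assume "a = 1 \<and> b = 0 \<and> c = 0 \<and> e = 1"
          then show ?thesis using Lam pq by (intro exI[of _ Mu] exI[of _ "A i"]) auto
        next
          assume "a = 0 \<and> b = 1 \<and> c = 1 \<and> e = 0"
          then show ?thesis using Lam pq by (intro exI[of _ Nu] exI[of _ "B i"]) auto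
        qed
      qed (use d pq p q F1 F2 in \<open>auto simp: padd_def\<close>)
    qed
  qed
qed

definition Lx :: "(nat, nat) pgraph" where
 "Lx = \<lparr>pmor = range (to_nat :: M \<Rightarrow> nat), prng = (\<lambda>n. to_nat (rngM (from_nat n))),
        psrc = (\<lambda>n. to_nat (srcM (from_nat n))),
        pcomp = (\<lambda>a b. to_nat (compM (from_nat a) (from_nat b))),
        pdeg = (\<lambda>n. to_nat (degM (from_nat n)))\<rparr>"

lemma Lx_simps [simp]: "pmor Lx = range (to_nat :: M \<Rightarrow> nat)"
  "prng Lx (to_nat x) = to_nat (rngM x)" "psrc Lx (to_nat x) = to_nat (srcM x)"
  "pcomp Lx (to_nat x) (to_nat y) = to_nat (compM x y)" "pdeg Lx (to_nat x) = to_nat (degM x)"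
  by (auto simp: Lx_def)

lemma ball_range: "(\<forall>x\<in>range f. P x) = (\<forall>y. P (f y))" by auto

lemma pgraph_x: "pgraph Gx Px Lx"
  unfolding pgraph_def
proof (intro conjI)
  show "small_cat Lx" unfolding small_cat_def ball_range
    using rr_M comp_M assoc_M id_M by simp
  show "countable (pmor Lx)" by simp
  show "\<forall>x\<in>pmor Lx. pdeg Lx x \<in> Px" unfolding Px_def using deg_nonneg by auto
  show "\<forall>v\<in>pobj Lx. pdeg Lx v = \<one>\<^bsub>Gx\<^esub>" unfolding pobj_def using obj_M by auto
  show "\<forall>x\<in>pmor Lx. \<forall>y\<in>pmor Lx. psrc Lx x = prng Lx y \<longrightarrow>
         pdeg Lx (pcomp Lx x y) = pdeg Lx x \<otimes>\<^bsub>Gx\<^esub> pdeg Lx y"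
    using comp_M by auto
  show "\<forall>l\<in>pmor Lx. \<forall>p\<in>Px. \<forall>q\<in>Px. pdeg Lx l = p \<otimes>\<^bsub>Gx\<^esub> q \<longrightarrow>
         (\<exists>!(m, n). m \<in> pmor Lx \<and> n \<in> pmor Lx \<and> psrc Lx m = prng Lx n
             \<and> pcomp Lx m n = l \<and> pdeg Lx m = p \<and> pdeg Lx n = q)"
  proof (intro ballI impI)
    fix l p q assume l: "l \<in> pmor Lx" and p: "p \<in> Px" and q: "q \<in> Px" and d: "pdeg Lx l = p \<otimes>\<^bsub>Gx\<^esub> q"
    obtain l0 :: M where l0: "l = to_nat l0" using l unfolding Lx_simps by blast
    obtain p0 :: "int\<times>int" where p0: "p = to_nat p0" "0 \<le> fst p0" "0 \<le> snd p0" using p unfolding Px_def by blast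
    obtain q0 :: "int\<times>int" where q0: "q = to_nat q0" "0 \<le> fst q0" "0 \<le> snd q0" using q unfolding Px_def by blast
    have d0: "degM l0 = padd p0 q0" using d l0 p0 q0 by simp
    obtain m0 n0 where mn: "srcM m0 = rngM n0" "compM m0 n0 = l0" "degM m0 = p0" "degM n0 = q0"
      using exist_M[OF p0(2,3) q0(2,3) d0] by blast
    show "\<exists>!(m, n). m \<in> pmor Lx \<and> n \<in> pmor Lx \<and> psrc Lx m = prng Lx n
             \<and> pcomp Lx m n = l \<and> pdeg Lx m = p \<and> pdeg Lx n = q"
    proof (rule ex1I[of _ "(to_nat m0, to_nat n0)"])
      show "case (to_nat m0, to_nat n0) of (m, n) \<Rightarrow> m \<in> pmor Lx \<and> n \<in> pmor Lx \<and> psrc Lx m = prng Lx n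
             \<and> pcomp Lx m n = l \<and> pdeg Lx m = p \<and> pdeg Lx n = q"
        using mn l0 p0 q0 by simp
    next
      fix z assume "case z of (m, n) \<Rightarrow> m \<in> pmor Lx \<and> n \<in> pmor Lx \<and> psrc Lx m = prng Lx n
             \<and> pcomp Lx m n = l \<and> pdeg Lx m = p \<and> pdeg Lx n = q"
      then obtain m1 n1 :: M where z: "z = (to_nat m1, to_nat n1)"
        "psrc Lx (to_nat m1) = prng Lx (to_nat n1)" "pcomp Lx (to_nat m1) (to_nat n1) = l"
        "pdeg Lx (to_nat m1) = p" "pdeg Lx (to_nat n1) = q"
        by (cases z) auto
      have "srcM m1 = rngM n1" "compM m1 n1 = l0" "degM m1 = p0" "degM n1 = q0"
        using z(2-5) l0 p0 q0 by auto
      then have "m1 = m0 \<and> n1 = n0" using uniq_M mn by blast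
      then show "z = (to_nat m0, to_nat n0)" using z(1) by simp
    qed
  qed
qed


lemma rset_x: "rset Lx (to_nat a) = to_nat ` {compM a w | w. srcM a = rngM w}"
proof (intro equalityI subsetI)
  fix x assume "x \<in> rset Lx (to_nat a)"
  then obtain m where m: "m \<in> range (to_nat :: M \<Rightarrow> nat)" "psrc Lx (to_nat a) = prng Lx m" "x = pcomp Lx (to_nat a) m"
    unfolding rset_def by auto
  then obtain w :: M where w: "m = to_nat w" by blast
  have "srcM a = rngM w" "x = to_nat (compM a w)" using m w by auto
  then show "x \<in> to_nat ` {compM a w | w. srcM a = rngM w}" by blast
next
  fix x assume "x \<in> to_nat ` {compM a w | w. srcM a = rngM w}"
  then obtain w where w: "srcM a = rngM w" "x = to_nat (compM a w)" by blast
  then have "x = pcomp Lx (to_nat a) (to_nat w) \<and> to_nat w \<in> pmor Lx \<and> psrc Lx (to_nat a) = prng Lx (to_nat w)"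
    by simp
  then show "x \<in> rset Lx (to_nat a)" unfolding rset_def by blast
qed

lemma rngZ: "Z = rngM w \<longleftrightarrow> w = Z" by (cases w) auto
lemma rngX: "X = rngM w \<longleftrightarrow> w = X \<or> (\<exists>i. w = A i)" by (cases w) auto
lemma rngY: "Y = rngM w \<longleftrightarrow> w = Y \<or> (\<exists>i. w = B i)" by (cases w) auto

lemma sZ: assumes "srcM a = Z" shows "{compM a w | w. srcM a = rngM w} = {compM a Z}"
proof (intro equalityI subsetI)
  fix x assume "x \<in> {compM a w | w. srcM a = rngM w}"
  then show "x \<in> {compM a Z}" unfolding assms rngZ by auto
next
  fix x assume "x \<in> {compM a Z}"
  then have "x = compM a Z \<and> srcM a = rngM Z" using assms by simp
  then show "x \<in> {compM a w | w. srcM a = rngM w}" by blast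
qed

lemma sX: "{compM Mu w | w. srcM Mu = rngM w} = {Mu} \<union> range Lam"
proof (intro equalityI subsetI)
  fix x assume "x \<in> {compM Mu w | w. srcM Mu = rngM w}"
  then show "x \<in> {Mu} \<union> range Lam" unfolding srcM.simps rngX by auto
next
  fix x assume "x \<in> {Mu} \<union> range Lam"
  then show "x \<in> {compM Mu w | w. srcM Mu = rngM w}"
  proof
    assume "x \<in> {Mu}" then have "x = compM Mu X \<and> srcM Mu = rngM X" by simp
    then show ?thesis by blast
  next
    assume "x \<in> range Lam" then obtain i where "x = Lam i" by blast
    then have "x = compM Mu (A i) \<and> srcM Mu = rngM (A i)" by simp
    then show ?thesis by blast
  qed
qed

lemma sY: "{compM Nu w | w. srcM Nu = rngM w} = {Nu} \<union> range Lam"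
proof (intro equalityI subsetI)
  fix x assume "x \<in> {compM Nu w | w. srcM Nu = rngM w}"
  then show "x \<in> {Nu} \<union> range Lam" unfolding srcM.simps rngY by auto
next
  fix x assume "x \<in> {Nu} \<union> range Lam"
  then show "x \<in> {compM Nu w | w. srcM Nu = rngM w}"
  proof
    assume "x \<in> {Nu}" then have "x = compM Nu Y \<and> srcM Nu = rngM Y" by simp
    then show ?thesis by blast
  next
    assume "x \<in> range Lam" then obtain i where "x = Lam i" by blast
    then have "x = compM Nu (B i) \<and> srcM Nu = rngM (B i)" by simp
    then show ?thesis by blast
  qed
qed

lemma rset_Ll: "rset Lx (to_nat Ll) = {to_nat Ll}"
proof -
  have "rset Lx (to_nat Ll) = to_nat ` {compM Ll Z}" unfolding rset_x by (rule arg_cong[OF sZ]) simp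
  then show ?thesis by simp
qed
lemma rset_Lam: "rset Lx (to_nat (Lam i)) = {to_nat (Lam i)}"
proof -
  have "rset Lx (to_nat (Lam i)) = to_nat ` {compM (Lam i) Z}" unfolding rset_x by (rule arg_cong[OF sZ]) simp
  then show ?thesis by simp
qed
lemma rset_Mu: "rset Lx (to_nat Mu) = to_nat ` ({Mu} \<union> range Lam)"
  unfolding rset_x sX ..
lemma rset_Nu: "rset Lx (to_nat Nu) = to_nat ` ({Nu} \<union> range Lam)"
  unfolding rset_x sY ..

lemma Ll_FA: "to_nat Ll \<in> FA Lx"
  unfolding FA_def fa_at_def
proof (intro CollectI conjI ballI)
  fix m n assume m0: "m \<in> rset Lx (to_nat Ll)" and n: "n \<in> pmor Lx"
  have m: "m \<in> {to_nat Ll}" using m0 rset_Ll by simp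
  show "fa_pair Lx m n"
  proof (cases "to_nat Ll \<in> rset Lx n")
    case True
    then show ?thesis unfolding fa_pair_def using m rset_Ll
      by (intro exI[of _ "{to_nat Ll}"]) auto
  next
    case False
    then show ?thesis unfolding fa_pair_def using m rset_Ll
      by (intro exI[of _ "{}"]) auto
  qed
qed simp

lemma not_fa: "\<not> fa_pair Lx (to_nat Mu) (to_nat Nu)"
proof
  assume "fa_pair Lx (to_nat Mu) (to_nat Nu)"
  then obtain J where J: "finite J" "J \<subseteq> pmor Lx"
    "rset Lx (to_nat Mu) \<inter> rset Lx (to_nat Nu) = (\<Union>l\<in>J. rset Lx l)" unfolding fa_pair_def by blast
  have I: "rset Lx (to_nat Mu) \<inter> rset Lx (to_nat Nu) = to_nat ` range Lam"
    unfolding rset_Mu rset_Nu by auto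
  have jf: "\<exists>i. j = to_nat (Lam i)" if j: "j \<in> J" for j
  proof -
    obtain j0 :: M where j0: "j = to_nat j0" using j J(2) unfolding Lx_simps by blast
    have "j0 = compM j0 (srcM j0) \<and> srcM j0 = rngM (srcM j0)" using id_M rr_M by simp
    then have "to_nat j0 \<in> rset Lx (to_nat j0)" unfolding rset_x by blast
    then have "j \<in> to_nat ` range Lam" using J(3) I j j0 by blast
    then show ?thesis by auto
  qed
  have "to_nat ` range Lam \<subseteq> J"
  proof
    fix x assume "x \<in> to_nat ` range Lam"
    then obtain j where j: "j \<in> J" "x \<in> rset Lx j" using J(3) I by blast
    then show "x \<in> J" using jf[OF j(1)] rset_Lam by auto
  qed
  then have "finite (to_nat ` range Lam)" using J(1) finite_subset by blast
  then have "finite (range Lam)" using finite_imageD inj_to_nat by (metis inj_on_subset subset_UNIV)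
  moreover have "inj Lam" by (auto simp: inj_def)
  ultimately show False using range_inj_infinite by blast
qed

lemma V_notFA: "prng Lx (to_nat Ll) \<notin> FA Lx"
proof
  assume "prng Lx (to_nat Ll) \<in> FA Lx"
  then have "fa_at Lx (to_nat V)" unfolding FA_def by simp
  moreover have "to_nat Mu \<in> rset Lx (to_nat V)" unfolding rset_x by force
  ultimately show False using not_fa unfolding fa_at_def by auto
qed

lemma part4: "\<exists>(G' :: nat monoid) (P' :: nat set) (L' :: (nat, nat) pgraph).
          wqlo G' P' \<and> pgraph G' P' L' \<and> (\<exists>l\<in>FA L'. prng L' l \<notin> FA L')"
  using wqlo_x pgraph_x Ll_FA V_notFA by blast


theorem lemma3p5:
  fixes G :: "'q monoid" and P :: "'q set" and L :: "('a, 'q) pgraph"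
  assumes "wqlo G P" and "pgraph G P L"
  shows "(\<forall>l\<in>FA L. \<forall>l'\<in>pmor L. psrc L l = prng L l' \<longrightarrow> pcomp L l l' \<in> FA L)
    \<and> (\<forall>m\<in>pmor L. \<forall>d\<in>pmor L. psrc L m = prng L d \<longrightarrow> pcomp L m d \<in> FA L \<longrightarrow> d \<in> FA L)
    \<and> (\<forall>l\<in>FA L. psrc L l \<in> FA L)
    \<and> (\<exists>(G' :: nat monoid) (P' :: nat set) (L' :: (nat, nat) pgraph).
          wqlo G' P' \<and> pgraph G' P' L' \<and> (\<exists>l\<in>FA L'. prng L' l \<notin> FA L'))
    \<and> (\<forall>m\<in>FA L. rset L (psrc L m) \<subseteq> FA L)
    \<and> (\<forall>m\<in>FA L. \<forall>n\<in>FA L. \<exists>J. finite J \<and> J \<subseteq> FA L \<and>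
          rset L m \<inter> rset L n = (\<Union>l\<in>J. rset L l))"
proof -
  interpret pg G P L using assms by (rule pg.intro)
  have A: "\<forall>l\<in>FA L. \<forall>l'\<in>pmor L. psrc L l = prng L l' \<longrightarrow> pcomp L l l' \<in> FA L"
    using part1 by blast
  have B: "\<forall>m\<in>pmor L. \<forall>d\<in>pmor L. psrc L m = prng L d \<longrightarrow> pcomp L m d \<in> FA L \<longrightarrow> d \<in> FA L"
    using part2 by blast
  have C: "\<forall>l\<in>FA L. psrc L l \<in> FA L" using part3 by blast
  have E: "\<forall>m\<in>FA L. rset L (psrc L m) \<subseteq> FA L" using part5 by blast
  have F: "\<forall>m\<in>FA L. \<forall>n\<in>FA L. \<exists>J. finite J \<and> J \<subseteq> FA L \<and>
          rset L m \<inter> rset L n = (\<Union>l\<in>J. rset L l)" using part6 by blast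
  show ?thesis using A B C part4 E F by (intro conjI)
qed

end
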